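(* Let \((G,\hat{k})\) be an instance with \(\mathrm{surplus}(G)\ge 2\) given to one of Branching Rules 1 or 2 (which applies to it), and let \((G_i,\hat{k}_i)\) be any instance output by the rule. Then \(\hat{k}_i\leq\hat{k}-1\).
   Context: All graphs are finite, undirected and simple. \(MM(G)\) is the size of a maximum matching; \(LP(G)\) is the optimum value of the LP: minimize \(\sum_v x_v\) subject to \(x_u+x_v\ge1\) for each edge \(\{u,v\}\) and \(0\le x_v\le1\). \(\mathrm{surplus}(G)\) is the minimum of \(|N(Z)|-|Z|\) over nonempty independent sets \(Z\), where \(N(Z)\) is the set of vertices outside \(Z\) adjacent to \(Z\). For an instance \((G,\hat{k})\), let \(k=(2LP(G)-MM(G))+\hat{k}\), so \(\hat{k}=k+MM(G)-2LP(G)\). The Gallai–Edmonds decomposition of a graph \(H\) is \(V(H)=O\uplus I\uplus P\) where \(O\) is the set of vertices left unsaturated by some maximum matching of \(H\), \(I=N(O)\), \(P=V(H)\setminus(O\cup I)\). \(G\setminus X\) denotes \(G[V(G)\setminus X]\). With \(O\uplus I\uplus P\) the Gallai–Edmonds decomposition of \(G\): Branching Rule 1 applies iff \(G[I\cup P]\) has an edge \(\{u,v\}\); it outputs \((G_1,\hat{k}_1),(G_2,\hat{k}_2)\) with \(G_1=G\setminus\{u\}\), \(G_2=G\setminus\{v\}\), \(k_i=k-1\), \(\hat{k}_i=k_i+MM(G_i)-2LP(G_i)\). Branching Rule 2 applies iff Rule 1 does not: pick \(u\in O\) with two neighbours \(v,w\in O\); let \(G'=G\setminus\{u\}\) with Gallai–Edmonds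 decomposition \(O'\uplus I'\uplus P'\), and pick an edge \(\{x,y\}\) of \(G'[P']\); output \((G_1,\hat{k}_1),(G_2,\hat{k}_2),(G_3,\hat{k}_3)\) with \(G_1=G\setminus\{v,w\}\), \(G_2=G'\setminus\{x\}\), \(G_3=G'\setminus\{y\}\), \(k_i=k-2\), \(\hat{k}_i=k_i+MM(G_i)-2LP(G_i)\). *)

theory Defs
  imports Complex_Main
begin

type_synonym 'a graph = "'a set \<times> 'a set set"

definition verts :: "'a graph \<Rightarrow> 'a set" where "verts G = fst G"
definition edges :: "'a graph \<Rightarrow> 'a set set" where "edges G = snd G"

definition simple_graph :: "'a graph \<Rightarrow> bool" where
  "simple_graph G \<longleftrightarrow> finite (verts G) \<and>
     (\<forall>e\<in>edges G. \<exists>u v. u \<noteq> v \<and> u \<in> verts G \<and> v \<in> verts G \<and> e = {u, v})"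

definition del :: "'a graph \<Rightarrow> 'a set \<Rightarrow> 'a graph" where
  "del G X = (verts G - X, {e \<in> edges G. e \<inter> X = {}})"

definition nbhd :: "'a graph \<Rightarrow> 'a set \<Rightarrow> 'a set" where
  "nbhd G Z = {v \<in> verts G - Z. \<exists>z\<in>Z. {z, v} \<in> edges G}"

definition indep :: "'a graph \<Rightarrow> 'a set \<Rightarrow> bool" where
  "indep G Z \<longleftrightarrow> Z \<subseteq> verts G \<and> (\<forall>u\<in>Z. \<forall>v\<in>Z. {u, v} \<notin> edges G)"

definition surplus :: "'a graph \<Rightarrow> int" where
  "surplus G = Min {int (card (nbhd G Z)) - int (card Z) | Z. Z \<noteq> {} \<and> indep G Z}"

definition matching :: "'a graph \<Rightarrow> 'a set set \<Rightarrow> bool" where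
  "matching G M \<longleftrightarrow> M \<subseteq> edges G \<and> (\<forall>e1\<in>M. \<forall>e2\<in>M. e1 \<noteq> e2 \<longrightarrow> e1 \<inter> e2 = {})"

definition MM :: "'a graph \<Rightarrow> nat" where
  "MM G = Max {card M | M. matching G M}"

definition max_matching :: "'a graph \<Rightarrow> 'a set set \<Rightarrow> bool" where
  "max_matching G M \<longleftrightarrow> matching G M \<and> card M = MM G"

definition LP :: "'a graph \<Rightarrow> real" where
  "LP G = Inf {(\<Sum>v\<in>verts G. x v) | x :: 'a \<Rightarrow> real.
     (\<forall>v\<in>verts G. 0 \<le> x v \<and> x v \<le> 1) \<and> (\<forall>u v. {u, v} \<in> edges G \<longrightarrow> x u + x v \<ge> 1)}"

definition GE_O :: "'a graph \<Rightarrow> 'a set" where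
  "GE_O G = {v \<in> verts G. \<exists>M. max_matching G M \<and> (\<forall>e\<in>M. v \<notin> e)}"

definition GE_I :: "'a graph \<Rightarrow> 'a set" where
  "GE_I G = nbhd G (GE_O G)"

definition GE_P :: "'a graph \<Rightarrow> 'a set" where
  "GE_P G = verts G - (GE_O G \<union> GE_I G)"

definition khat :: "'a graph \<Rightarrow> int \<Rightarrow> real" where
  "khat G k = real_of_int k + real (MM G) - 2 * LP G"

inductive branch_output :: "'a graph \<Rightarrow> int \<Rightarrow> 'a graph \<Rightarrow> int \<Rightarrow> bool" where
  rule1: "\<lbrakk> {u, v} \<in> edges G; u \<in> GE_I G \<union> GE_P G; v \<in> GE_I G \<union> GE_P G;
            Gi \<in> {del G {u}, del G {v}} \<rbrakk>
          \<Longrightarrow> branch_output G k Gi (k - 1)"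
| rule2: "\<lbrakk> \<not> (\<exists>a b. {a, b} \<in> edges G \<and> a \<in> GE_I G \<union> GE_P G \<and> b \<in> GE_I G \<union> GE_P G);
            u \<in> GE_O G; v \<in> GE_O G; w \<in> GE_O G; v \<noteq> w;
            {u, v} \<in> edges G; {u, w} \<in> edges G;
            G' = del G {u};
            {x, y} \<in> edges G'; x \<in> GE_P G'; y \<in> GE_P G';
            Gi \<in> {del G {v, w}, del G' {x}, del G' {y}} \<rbrakk>
          \<Longrightarrow> branch_output G k Gi (k - 2)"

end

theory Submission
  imports Defs
begin


definition pm :: "'a set set \<Rightarrow> bool" where
  "pm M \<longleftrightarrow> (\<forall>e\<in>M. \<exists>a b. a \<noteq> b \<and> e = {a,b}) \<and> (\<forall>e1\<in>M. \<forall>e2\<in>M. e1 \<noteq> e2 \<longrightarrow> e1 \<inter> e2 = {})"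

lemma pm_subset: "pm M \<Longrightarrow> M' \<subseteq> M \<Longrightarrow> pm M'"
  unfolding pm_def by (meson subsetD)

lemma pm_insert:
  assumes "pm M" "a \<noteq> b" "a \<notin> \<Union>M" "b \<notin> \<Union>M"
  shows "pm (insert {a,b} M)"
  unfolding pm_def
proof (intro conjI ballI impI)
  fix e assume "e \<in> insert {a,b} M"
  thus "\<exists>a b. a \<noteq> b \<and> e = {a, b}"
    using assms(1,2) unfolding pm_def by (cases "e = {a,b}") auto
next
  fix e1 e2 assume e: "e1 \<in> insert {a,b} M" "e2 \<in> insert {a,b} M" "e1 \<noteq> e2"
  have d: "\<And>e. e \<in> M \<Longrightarrow> {a,b} \<inter> e = {}" using assms(3,4) by blast
  show "e1 \<inter> e2 = {}"
  proof (cases "e1 = {a,b}")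
    case True
    hence "e2 \<in> M" using e by simp
    thus ?thesis using d True by simp
  next
    case False
    hence e1M: "e1 \<in> M" using e by simp
    show ?thesis
    proof (cases "e2 = {a,b}")
      case True
      thus ?thesis using d[OF e1M] by blast
    next
      case False
      hence "e2 \<in> M" using e by simp
      thus ?thesis using e1M e(3) assms(1) unfolding pm_def by blast
    qed
  qed
qed

lemma pm_disj: "pm M \<Longrightarrow> e \<in> M \<Longrightarrow> f \<in> M \<Longrightarrow> x \<in> e \<Longrightarrow> x \<in> f \<Longrightarrow> e = f"
  unfolding pm_def by (meson disjoint_iff)

lemma pm_edge: "pm M \<Longrightarrow> e \<in> M \<Longrightarrow> x \<in> e \<Longrightarrow> \<exists>y. y \<noteq> x \<and> e = {x,y}"
proof -
  assume a: "pm M" "e \<in> M" "x \<in> e"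
  then obtain p q where "p \<noteq> q" "e = {p,q}" unfolding pm_def by meson
  thus ?thesis using a(3) by (metis insert_commute insertE singletonD)
qed

lemma pm_fin_Union: "pm M \<Longrightarrow> finite M \<Longrightarrow> finite (\<Union>M)"
  unfolding pm_def by (metis finite.emptyI finite.insertI finite_Union)

lemma Union_remove: "pm M \<Longrightarrow> e \<in> M \<Longrightarrow> x \<in> e \<Longrightarrow> x \<notin> \<Union>(M - {e})"
  using pm_disj by fastforce

lemma alt_path:
  fixes M N :: "'a set set"
  assumes "finite M" "finite N" "pm M" "pm N" "u \<in> \<Union>M" "u \<notin> \<Union>N"
  shows "\<exists>M' N'. pm M' \<and> pm N' \<and> M' \<subseteq> M \<union> N \<and> N' \<subseteq> M \<union> N \<and>
           card M' + card N' = card M + card N \<and> u \<notin> \<Union>M' \<and> card (\<Union>M' - \<Union>M) \<le> 1"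
  using assms
proof (induction "card M + card N" arbitrary: M N u rule: less_induct)
  case less
  from less.prems obtain e where eM: "e \<in> M" and ue: "u \<in> e" by auto
  obtain z where zu: "z \<noteq> u" and ez: "e = {u,z}" using pm_edge[OF less.prems(3) eM ue] by blast
  have ze: "z \<in> e" using ez by simp
  have eN: "e \<notin> N" using less.prems(6) ue by blast
  define M1 where "M1 = M - {e}"
  have uM1: "u \<notin> \<Union>M1" unfolding M1_def by (rule Union_remove[OF less.prems(3) eM ue])
  have zM1: "z \<notin> \<Union>M1" unfolding M1_def by (rule Union_remove[OF less.prems(3) eM ze])
  have cM: "card M1 + 1 = card M" using less.prems(1) eM unfolding M1_def
    by (metis Suc_eq_plus1 card_Suc_Diff1)
  have M1M: "M1 \<subseteq> M" "e \<notin> M1" "finite M1" unfolding M1_def using less.prems(1) by auto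
  have pM1: "pm M1" using pm_subset[OF less.prems(3) M1M(1)] .
  have zM: "z \<in> \<Union>M" using eM ze by blast
  have UM1: "\<Union>M1 \<subseteq> \<Union>M" using M1M(1) by blast
  show ?case
  proof (cases "z \<in> \<Union>N")
    case False
    define N' where "N' = insert e N"
    have r4: "pm N'" unfolding N'_def ez using pm_insert[OF less.prems(4) zu[symmetric] less.prems(6) False] by simp
    have "card N' = card N + 1" unfolding N'_def using less.prems(2) eN by simp
    hence r2: "card M1 + card N' = card M + card N" using cM by linarith
    have r3: "M1 \<subseteq> M \<union> N" "N' \<subseteq> M \<union> N" using M1M(1) eM unfolding N'_def by blast+
    have "\<Union>M1 - \<Union>M = {}" using UM1 by blast
    hence r1: "card (\<Union>M1 - \<Union>M) \<le> 1" by (metis card.empty zero_le)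
    show ?thesis by (intro exI[of _ M1] exI[of _ N'] conjI; fact)
  next
    case True
    then obtain f where fN: "f \<in> N" and zf: "z \<in> f" by auto
    obtain y where yz: "y \<noteq> z" and fy: "f = {z,y}" using pm_edge[OF less.prems(4) fN zf] by blast
    have yf: "y \<in> f" using fy by simp
    have yu: "y \<noteq> u" using less.prems(6) fN yf by blast
    have fe: "f \<noteq> e" using fN eN by blast
    have fM: "f \<notin> M" using pm_disj[OF less.prems(3) eM _ ze zf] fe by blast
    define N1 where "N1 = N - {f}"
    have uN1: "u \<notin> \<Union>N1" using less.prems(6) unfolding N1_def by blast
    have zN1: "z \<notin> \<Union>N1" unfolding N1_def by (rule Union_remove[OF less.prems(4) fN zf])
    have yN1: "y \<notin> \<Union>N1" unfolding N1_def by (rule Union_remove[OF less.prems(4) fN yf])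
    have cN: "card N1 + 1 = card N" using less.prems(2) fN unfolding N1_def
      by (metis Suc_eq_plus1 card_Suc_Diff1)
    have N1N: "N1 \<subseteq> N" "f \<notin> N1" "finite N1" unfolding N1_def using less.prems(2) by auto
    have pN1: "pm N1" using pm_subset[OF less.prems(4) N1N(1)] .
    have fM1: "f \<notin> M1" using fM M1M(1) by blast
    have eN1: "e \<notin> N1" using eN N1N(1) by blast
    show ?thesis
    proof (cases "y \<in> \<Union>M1")
      case True
      have lt: "card M1 + card N1 < card M + card N" using cM cN by linarith
      obtain M1' N1' where IH: "pm M1'" "pm N1'" "M1' \<subseteq> M1 \<union> N1" "N1' \<subseteq> M1 \<union> N1"
        "card M1' + card N1' = card M1 + card N1" "y \<notin> \<Union>M1'" "card (\<Union>M1' - \<Union>M1) \<le> 1"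
        using less.hyps[OF lt M1M(3) N1N(3) pM1 pN1 True yN1] by blast
      have finM1': "finite M1'" "finite N1'" using IH(3,4) M1M(3) N1N(3)
        by (meson finite_UnI finite_subset)+
      have zM1': "z \<notin> \<Union>M1'" "u \<notin> \<Union>M1'" using IH(3) zM1 zN1 uM1 uN1 by blast+
      have uN1': "u \<notin> \<Union>N1'" "z \<notin> \<Union>N1'" using IH(4) zM1 zN1 uM1 uN1 by blast+
      define M' where "M' = insert f M1'"
      define N' where "N' = insert e N1'"
      have p1: "pm M'" unfolding M'_def fy using pm_insert[OF IH(1) yz[symmetric] zM1'(1) IH(6)] .
      have p2: "pm N'" unfolding N'_def ez using pm_insert[OF IH(2) zu[symmetric] uN1'(1) uN1'(2)] .
      have fM1': "f \<notin> M1'" using IH(3) fM1 N1N(2) by blast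
      have eN1': "e \<notin> N1'" using IH(4) M1M(2) eN1 by blast
      have cM': "card M' = card M1' + 1" unfolding M'_def using finM1'(1) fM1' by simp
      have cN': "card N' = card N1' + 1" unfolding N'_def using finM1'(2) eN1' by simp
      have c: "card M' + card N' = card M + card N" using cM' cN' IH(5) cM cN by linarith
      have fin1: "finite (\<Union>M1')" using pm_fin_Union[OF IH(1) finM1'(1)] .
      have yM: "y \<in> \<Union>M" using True UM1 by blast
      have UM': "\<Union>M' = {z,y} \<union> \<Union>M1'" unfolding M'_def fy by simp
      have "\<Union>M' - \<Union>M \<subseteq> \<Union>M1' - \<Union>M1" unfolding UM' using zM yM UM1 by blast
      hence r1: "card (\<Union>M' - \<Union>M) \<le> 1" using IH(7) fin1
        by (meson card_mono finite_Diff le_trans)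
      have r2: "u \<notin> \<Union>M'" unfolding UM' using zM1'(2) zu yu by blast
      have r3: "M' \<subseteq> M \<union> N" "N' \<subseteq> M \<union> N" unfolding M'_def N'_def
        using IH(3,4) fN eM M1M(1) N1N(1) by blast+
      show ?thesis by (intro exI[of _ M'] exI[of _ N'] conjI; fact)
    next
      case False
      define M' where "M' = insert f M1"
      define N' where "N' = insert e N1"
      have p1: "pm M'" unfolding M'_def fy using pm_insert[OF pM1 yz[symmetric] zM1 False] .
      have p2: "pm N'" unfolding N'_def ez using pm_insert[OF pN1 zu[symmetric] uN1 zN1] .
      have cM': "card M' = card M1 + 1" unfolding M'_def using M1M(3) fM1 by simp
      have cN': "card N' = card N1 + 1" unfolding N'_def using N1N(3) eN1 by simp
      have c: "card M' + card N' = card M + card N" using cM' cN' cM cN by linarith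
      have UM': "\<Union>M' = {z,y} \<union> \<Union>M1" unfolding M'_def fy by simp
      have sy: "\<Union>M' - \<Union>M \<subseteq> {y}" unfolding UM' using zM UM1 by blast
      have r1: "card (\<Union>M' - \<Union>M) \<le> 1"
      proof -
        have "card {y} = 1" by simp
        thus ?thesis using card_mono[OF finite.insertI[OF finite.emptyI] sy] by linarith
      qed
      have r2: "u \<notin> \<Union>M'" unfolding UM' using uM1 zu yu by blast
      have r3: "M' \<subseteq> M \<union> N" "N' \<subseteq> M \<union> N" unfolding M'_def N'_def
        using fN eM M1M(1) N1N(1) by blast+
      show ?thesis by (intro exI[of _ M'] exI[of _ N'] conjI; fact)
    qed
  qed
qed



lemma sg_fin_edges: "simple_graph G \<Longrightarrow> finite (edges G)"
proof -
  assume a: "simple_graph G"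
  have "edges G \<subseteq> Pow (verts G)"
  proof
    fix e assume "e \<in> edges G"
    then obtain p q where "p \<in> verts G" "q \<in> verts G" "e = {p,q}" using a unfolding simple_graph_def by meson
    thus "e \<in> Pow (verts G)" by simp
  qed
  moreover have "finite (verts G)" using a unfolding simple_graph_def by blast
  ultimately show ?thesis using finite_subset by blast
qed

lemma matching_fin: "simple_graph G \<Longrightarrow> matching G M \<Longrightarrow> finite M"
  unfolding matching_def using sg_fin_edges finite_subset by blast

lemma matching_pm: "simple_graph G \<Longrightarrow> matching G M \<Longrightarrow> pm M"
  unfolding matching_def pm_def simple_graph_def by (meson subsetD)

lemma MM_set_fin: "simple_graph G \<Longrightarrow> finite {card M |M. matching G M}"
proof -
  assume a: "simple_graph G"
  have "{card M |M. matching G M} \<subseteq> {..card (edges G)}"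
  proof
    fix n assume "n \<in> {card M |M. matching G M}"
    then obtain M where "n = card M" "matching G M" by blast
    hence "M \<subseteq> edges G" unfolding matching_def by blast
    hence "card M \<le> card (edges G)" using card_mono[OF sg_fin_edges[OF a]] by blast
    thus "n \<in> {..card (edges G)}" using \<open>n = card M\<close> by simp
  qed
  thus ?thesis using finite_subset by blast
qed

lemma MM_ge: "simple_graph G \<Longrightarrow> matching G M \<Longrightarrow> card M \<le> MM G"
  unfolding MM_def by (rule Max_ge[OF MM_set_fin]) blast+

lemma MM_ex: "simple_graph G \<Longrightarrow> \<exists>M. matching G M \<and> card M = MM G"
proof -
  assume a: "simple_graph G"
  have "matching G {}" unfolding matching_def by simp
  hence "{card M |M. matching G M} \<noteq> {}" by blast
  from Max_in[OF MM_set_fin[OF a] this] obtain M where "Max {card M |M. matching G M} = card M" "matching G M"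
    by (smt (verit) mem_Collect_eq)
  thus ?thesis unfolding MM_def by metis
qed

lemma verts_del[simp]: "verts (del G X) = verts G - X" unfolding del_def verts_def by simp
lemma edges_del[simp]: "edges (del G X) = {e \<in> edges G. e \<inter> X = {}}" unfolding del_def edges_def by simp

lemma del_simple: "simple_graph G \<Longrightarrow> simple_graph (del G X)"
  unfolding simple_graph_def verts_del edges_del
proof (intro conjI ballI)
  assume a: "finite (verts G) \<and> (\<forall>e\<in>edges G. \<exists>u v. u \<noteq> v \<and> u \<in> verts G \<and> v \<in> verts G \<and> e = {u, v})"
  thus "finite (verts G - X)" by simp
  fix e assume e: "e \<in> {e \<in> edges G. e \<inter> X = {}}"
  then obtain p q where "p \<noteq> q" "p \<in> verts G" "q \<in> verts G" "e = {p,q}" using a by auto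
  moreover have "p \<notin> X" "q \<notin> X" using e \<open>e = {p,q}\<close> by auto
  ultimately show "\<exists>u v. u \<noteq> v \<and> u \<in> verts G - X \<and> v \<in> verts G - X \<and> e = {u, v}" by blast
qed

lemma del_del: "del (del G X) Y = del G (X \<union> Y)"
  unfolding del_def verts_def edges_def by auto

lemma matching_del: "matching (del G X) M \<Longrightarrow> matching G M"
  unfolding matching_def edges_del by blast

lemma MM_del_le: "simple_graph G \<Longrightarrow> MM (del G X) \<le> MM G"
proof -
  assume a: "simple_graph G"
  obtain M where "matching (del G X) M" "card M = MM (del G X)" using MM_ex[OF del_simple[OF a]] by blast
  thus ?thesis using MM_ge[OF a matching_del] by metis
qed

lemma MM_del_notO:
  assumes sg: "simple_graph G" and u: "u \<notin> GE_O G" and uV: "u \<in> verts G"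
  shows "MM (del G {u}) + 1 \<le> MM G"
proof -
  obtain M where M: "matching (del G {u}) M" "card M = MM (del G {u})"
    using MM_ex[OF del_simple[OF sg]] by blast
  have mG: "matching G M" using matching_del[OF M(1)] .
  have le: "card M \<le> MM G" using MM_ge[OF sg mG] .
  have av: "\<forall>e\<in>M. u \<notin> e" using M(1) unfolding matching_def edges_del by blast
  have "card M \<noteq> MM G"
  proof
    assume "card M = MM G"
    hence "max_matching G M" using mG unfolding max_matching_def by simp
    hence "u \<in> GE_O G" using av uV unfolding GE_O_def by blast
    thus False using u by simp
  qed
  thus ?thesis using le M(2) by simp
qed



lemma half_lemma:
  fixes W :: "'a set" and E :: "'a set set" and d :: "'a \<Rightarrow> real"
  assumes fin: "finite W"
  and hall: "\<And>Z. Z \<subseteq> W \<Longrightarrow> Z \<noteq> {} \<Longrightarrow> (\<forall>a\<in>Z. \<forall>b\<in>Z. {a,b} \<notin> E) \<Longrightarrow>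
              card Z \<le> card {y \<in> W - Z. \<exists>z\<in>Z. {z,y} \<in> E}"
  and feas: "\<forall>a\<in>W. \<forall>b\<in>W. {a,b} \<in> E \<longrightarrow> d a + d b \<ge> 0"
  shows "sum d W \<ge> 0"
  using feas
proof (induction "card {v\<in>W. d v \<noteq> 0}" arbitrary: d rule: less_induct)
  case less
  define L where "L = {v\<in>W. d v < 0}"
  define U where "U = {v\<in>W. d v > 0}"
  show ?case
  proof (cases "L = {}")
    case True
    hence "\<forall>v\<in>W. d v \<ge> 0" unfolding L_def by (auto simp: not_less)
    thus ?thesis by (simp add: sum_nonneg)
  next
    case False
    define S where "S = {v\<in>W. d v \<noteq> 0}"
    have finS: "finite S" using fin unfolding S_def by simp
    have SnE: "S \<noteq> {}" using False unfolding L_def S_def by auto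
    define t where "t = Min ((\<lambda>v. \<bar>d v\<bar>) ` S)"
    have "t \<in> (\<lambda>v. \<bar>d v\<bar>) ` S" unfolding t_def using Min_in finS SnE by blast
    then obtain v0 where v0: "v0 \<in> S" "t = \<bar>d v0\<bar>" by blast
    have tle: "\<And>v. v \<in> S \<Longrightarrow> t \<le> \<bar>d v\<bar>" unfolding t_def using finS by simp
    have tpos: "t > 0" using v0 unfolding S_def by auto
    have LW: "L \<subseteq> W" "U \<subseteq> W" unfolding L_def U_def by auto
    have Lind: "\<forall>a\<in>L. \<forall>b\<in>L. {a,b} \<notin> E"
      using less.prems unfolding L_def by fastforce
    have NL: "{y \<in> W - L. \<exists>z\<in>L. {z,y} \<in> E} \<subseteq> U"
    proof
      fix y assume "y \<in> {y \<in> W - L. \<exists>z\<in>L. {z,y} \<in> E}"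
      then obtain z where "y \<in> W" "z \<in> L" "{z,y} \<in> E" by auto
      hence "d z + d y \<ge> 0" "d z < 0" using less.prems unfolding L_def by auto
      thus "y \<in> U" using \<open>y \<in> W\<close> unfolding U_def by auto
    qed
    have cLU: "card L \<le> card U"
      using hall[OF LW(1) False Lind] card_mono[OF _ NL] fin LW(2) finite_subset by fastforce
    define d' where "d' = (\<lambda>v. d v + (if v \<in> L then t else 0) - (if v \<in> U then t else 0))"
    have LU: "L \<inter> U = {}" unfolding L_def U_def by auto
    have nonneg: "\<And>a. a \<in> W \<Longrightarrow> a \<notin> L \<Longrightarrow> d' a \<ge> 0"
    proof -
      fix a assume a: "a \<in> W" "a \<notin> L"
      show "d' a \<ge> 0"
      proof (cases "a \<in> U")
        case True
        hence "a \<in> S" "d a > 0" unfolding U_def S_def by auto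
        with tle[of a] show ?thesis using True a unfolding d'_def by auto
      next
        case False
        thus ?thesis using a unfolding d'_def L_def U_def by auto
      qed
    qed
    have feas': "\<forall>a\<in>W. \<forall>b\<in>W. {a,b} \<in> E \<longrightarrow> d' a + d' b \<ge> 0"
    proof (intro ballI impI)
      fix a b assume ab: "a \<in> W" "b \<in> W" "{a,b} \<in> E"
      have ba: "{b,a} \<in> E" using ab(3) by (simp add: insert_commute)
      show "d' a + d' b \<ge> 0"
      proof (cases "a \<in> L")
        case True
        hence "b \<notin> L" using Lind ab(3) by blast
        hence "b \<in> U" using NL ab True by blast
        thus ?thesis using True LU less.prems ab unfolding d'_def by auto
      next
        case aL: False
        show ?thesis
        proof (cases "b \<in> L")
          case True
          hence "a \<in> U" using NL ab ba aL by blast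
          thus ?thesis using True LU less.prems ab unfolding d'_def by auto
        next
          case False
          thus ?thesis using nonneg[of a] nonneg[of b] aL ab by auto
        qed
      qed
    qed
    have sub: "{v\<in>W. d' v \<noteq> 0} \<subset> {v\<in>W. d v \<noteq> 0}"
    proof
      show "{v\<in>W. d' v \<noteq> 0} \<subseteq> {v\<in>W. d v \<noteq> 0}" unfolding d'_def L_def U_def by auto
      have "d' v0 = 0" using v0 unfolding d'_def L_def U_def S_def by auto
      thus "{v\<in>W. d' v \<noteq> 0} \<noteq> {v\<in>W. d v \<noteq> 0}" using v0 unfolding S_def by auto
    qed
    have "card {v\<in>W. d' v \<noteq> 0} < card {v\<in>W. d v \<noteq> 0}"
      using psubset_card_mono[OF _ sub] fin by simp
    from less.hyps[OF this feas'] have IH: "sum d' W \<ge> 0" .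
    have s1: "(\<Sum>v\<in>W. (if v \<in> L then t else 0)) = t * card L"
    proof -
      have "W \<inter> L = L" using LW by blast
      thus ?thesis using fin by (simp add: sum.If_cases)
    qed
    have s2: "(\<Sum>v\<in>W. (if v \<in> U then t else 0)) = t * card U"
    proof -
      have "W \<inter> U = U" using LW by blast
      thus ?thesis using fin by (simp add: sum.If_cases)
    qed
    have "sum d' W = sum d W + t * card L - t * card U"
      unfolding d'_def using s1 s2 by (simp add: sum.distrib sum_subtractf)
    moreover have "t * card L \<le> t * card U" using cLU tpos by simp
    ultimately show ?thesis using IH by linarith
  qed
qed



lemma edge_ne: "simple_graph G \<Longrightarrow> {a,b} \<in> edges G \<Longrightarrow> a \<noteq> b"
proof -
  assume s: "simple_graph G" "{a,b} \<in> edges G"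
  then obtain p q where pq: "p \<noteq> q" "{a,b} = {p,q}" unfolding simple_graph_def by meson
  show "a \<noteq> b"
  proof
    assume "a = b"
    hence "{a} = {p,q}" using pq by simp
    thus False using pq(1) by (metis insert_iff singletonD)
  qed
qed

lemma pm_matching: "pm M \<Longrightarrow> M \<subseteq> edges G \<Longrightarrow> matching G M"
  unfolding pm_def matching_def by blast

lemma aug:
  assumes sg: "simple_graph G" and M: "matching G M" and ab: "{a,b} \<in> edges G"
    and a: "a \<notin> \<Union>M" and b: "b \<notin> \<Union>M"
  shows "card M < MM G"
proof -
  have ne: "a \<noteq> b" using edge_ne[OF sg ab] .
  have p: "pm (insert {a,b} M)" using pm_insert[OF matching_pm[OF sg M] ne a b] .
  have "insert {a,b} M \<subseteq> edges G" using M ab unfolding matching_def by blast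
  hence m2: "matching G (insert {a,b} M)" using pm_matching[OF p] by blast
  have "{a,b} \<notin> M" using a by blast
  hence "card (insert {a,b} M) = card M + 1" using matching_fin[OF sg M] by simp
  thus ?thesis using MM_ge[OF sg m2] by linarith
qed

lemma MM_del_two:
  assumes sg: "simple_graph G" and uO: "u \<in> GE_O G" and uv: "{u,v} \<in> edges G"
    and uw: "{u,w} \<in> edges G" and vw: "v \<noteq> w"
  shows "MM (del G {v,w}) + 1 \<le> MM G"
proof (rule ccontr)
  assume contra: "\<not> MM (del G {v,w}) + 1 \<le> MM G"
  obtain N where N: "max_matching G N" "\<forall>e\<in>N. u \<notin> e" using uO unfolding GE_O_def by blast
  obtain M where M: "matching (del G {v,w}) M" "card M = MM (del G {v,w})"
    using MM_ex[OF del_simple[OF sg]] by blast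
  have mG: "matching G M" using matching_del[OF M(1)] .
  have cM: "card M = MM G" using MM_ge[OF sg mG] M(2) contra by linarith
  have vwM: "v \<notin> \<Union>M" "w \<notin> \<Union>M" using M(1) unfolding matching_def edges_del by blast+
  have mN: "matching G N" and cN: "card N = MM G" using N(1) unfolding max_matching_def by auto
  have uN: "u \<notin> \<Union>N" using N(2) by blast
  show False
  proof (cases "u \<in> \<Union>M")
    case False
    show False using aug[OF sg mG uv False vwM(1)] cM by simp
  next
    case True
    obtain M' N' where P: "pm M'" "pm N'" "M' \<subseteq> M \<union> N" "N' \<subseteq> M \<union> N"
      "card M' + card N' = card M + card N" "u \<notin> \<Union>M'" "card (\<Union>M' - \<Union>M) \<le> 1"
      using alt_path[OF matching_fin[OF sg mG] matching_fin[OF sg mN] matching_pm[OF sg mG]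
          matching_pm[OF sg mN] True uN] by blast
    have sub: "M \<union> N \<subseteq> edges G" using mG mN unfolding matching_def by blast
    have mM': "matching G M'" using pm_matching[OF P(1)] P(3) sub by blast
    have mN': "matching G N'" using pm_matching[OF P(2)] P(4) sub by blast
    have "card N' \<le> MM G" using MM_ge[OF sg mN'] .
    hence cM': "card M' \<ge> MM G" using P(5) cM cN by linarith
    have "\<not> (v \<in> \<Union>M' \<and> w \<in> \<Union>M')"
    proof
      assume "v \<in> \<Union>M' \<and> w \<in> \<Union>M'"
      hence "{v,w} \<subseteq> \<Union>M' - \<Union>M" using vwM by blast
      moreover have "finite (\<Union>M' - \<Union>M)"
        using pm_fin_Union[OF P(1)] P(3) matching_fin[OF sg mG] matching_fin[OF sg mN]
        by (meson finite_Diff finite_UnI finite_subset)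
      ultimately have "card {v,w} \<le> 1" using P(7) card_mono by (meson le_trans)
      thus False using vw by simp
    qed
    hence "v \<notin> \<Union>M' \<or> w \<notin> \<Union>M'" by blast
    thus False
    proof
      assume h: "v \<notin> \<Union>M'"
      show False using aug[OF sg mM' uv P(6) h] cM' by simp
    next
      assume h: "w \<notin> \<Union>M'"
      show False using aug[OF sg mM' uw P(6) h] cM' by simp
    qed
  qed
qed

lemma LP_upper:
  assumes sg: "simple_graph G"
  shows "LP G \<le> real (card (verts G)) / 2"
  unfolding LP_def
proof (rule cInf_lower)
  have "(\<Sum>v\<in>verts G. (\<lambda>_. 1/2::real) v) = real (card (verts G)) / 2" by simp
  moreover have "(\<forall>v\<in>verts G. 0 \<le> (\<lambda>_. 1/2::real) v \<and> (\<lambda>_. 1/2::real) v \<le> 1) \<and>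
     (\<forall>u v. {u, v} \<in> edges G \<longrightarrow> (\<lambda>_. 1/2::real) u + (\<lambda>_. 1/2::real) v \<ge> 1)" by simp
  ultimately show "real (card (verts G)) / 2 \<in> {(\<Sum>v\<in>verts G. x v) | x :: 'a \<Rightarrow> real.
     (\<forall>v\<in>verts G. 0 \<le> x v \<and> x v \<le> 1) \<and> (\<forall>u v. {u, v} \<in> edges G \<longrightarrow> x u + x v \<ge> 1)}"
    by (smt (verit) mem_Collect_eq)
  show "bdd_below {(\<Sum>v\<in>verts G. x v) | x :: 'a \<Rightarrow> real.
     (\<forall>v\<in>verts G. 0 \<le> x v \<and> x v \<le> 1) \<and> (\<forall>u v. {u, v} \<in> edges G \<longrightarrow> x u + x v \<ge> 1)}"
    by (rule bdd_belowI[of _ 0]) (auto intro: sum_nonneg)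
qed

lemma LP_lower:
  assumes "\<And>x. (\<forall>v\<in>verts H. 0 \<le> x v \<and> x v \<le> 1) \<Longrightarrow> (\<forall>u v. {u,v} \<in> edges H \<longrightarrow> 1 \<le> x u + x v)
     \<Longrightarrow> c \<le> sum x (verts H)"
  shows "c \<le> LP H"
  unfolding LP_def
proof (rule cInf_greatest)
  have "(\<forall>v\<in>verts H. 0 \<le> (\<lambda>_. 1::real) v \<and> (\<lambda>_. 1::real) v \<le> 1) \<and>
     (\<forall>u v. {u, v} \<in> edges H \<longrightarrow> (\<lambda>_. 1::real) u + (\<lambda>_. 1::real) v \<ge> 1)" by simp
  hence "(\<Sum>v\<in>verts H. (\<lambda>_. 1::real) v) \<in> {(\<Sum>v\<in>verts H. x v) | x :: 'a \<Rightarrow> real.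
     (\<forall>v\<in>verts H. 0 \<le> x v \<and> x v \<le> 1) \<and> (\<forall>u v. {u, v} \<in> edges H \<longrightarrow> x u + x v \<ge> 1)}"
    by (smt (verit) mem_Collect_eq)
  thus "{(\<Sum>v\<in>verts H. x v) | x :: 'a \<Rightarrow> real.
     (\<forall>v\<in>verts H. 0 \<le> x v \<and> x v \<le> 1) \<and> (\<forall>u v. {u, v} \<in> edges H \<longrightarrow> x u + x v \<ge> 1)} \<noteq> {}"
    by (metis empty_iff)
  fix s assume "s \<in> {(\<Sum>v\<in>verts H. x v) | x :: 'a \<Rightarrow> real.
     (\<forall>v\<in>verts H. 0 \<le> x v \<and> x v \<le> 1) \<and> (\<forall>u v. {u, v} \<in> edges H \<longrightarrow> x u + x v \<ge> 1)}"
  then obtain x where "s = sum x (verts H)" "\<forall>v\<in>verts H. 0 \<le> x v \<and> x v \<le> 1"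
    "\<forall>u v. {u, v} \<in> edges H \<longrightarrow> x u + x v \<ge> 1" by (smt (verit) mem_Collect_eq)
  thus "c \<le> s" using assms by simp
qed

lemma surplus_le:
  assumes sg: "simple_graph G" and Z: "Z \<noteq> {}" "indep G Z"
  shows "surplus G \<le> int (card (nbhd G Z)) - int (card Z)"
proof -
  let ?f = "\<lambda>Z. int (card (nbhd G Z)) - int (card Z)"
  have eq: "{int (card (nbhd G Z)) - int (card Z) | Z. Z \<noteq> {} \<and> indep G Z} = ?f ` {Z. Z \<noteq> {} \<and> indep G Z}"
    by blast
  have "{Z. Z \<noteq> {} \<and> indep G Z} \<subseteq> Pow (verts G)" unfolding indep_def by blast
  moreover have "finite (verts G)" using sg unfolding simple_graph_def by blast
  ultimately have "finite {Z. Z \<noteq> {} \<and> indep G Z}" using finite_subset by blast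
  hence fin: "finite {int (card (nbhd G Z)) - int (card Z) | Z. Z \<noteq> {} \<and> indep G Z}"
    unfolding eq by simp
  show ?thesis unfolding surplus_def by (rule Min_le[OF fin]) (use Z in blast)
qed

lemma LP_del_lower:
  assumes sg: "simple_graph G" and sp: "surplus G \<ge> 2" and fX: "finite X" and cX: "card X \<le> 2"
  shows "real (card (verts G - X)) / 2 \<le> LP (del G X)"
proof (rule LP_lower)
  fix x :: "'a \<Rightarrow> real"
  assume feas: "\<forall>u v. {u,v} \<in> edges (del G X) \<longrightarrow> 1 \<le> x u + x v"
  let ?W = "verts G - X" and ?E = "edges (del G X)"
  have finW: "finite ?W" using sg unfolding simple_graph_def by simp
  have hall: "card Z \<le> card {y \<in> ?W - Z. \<exists>z\<in>Z. {z,y} \<in> ?E}"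
    if Z: "Z \<subseteq> ?W" "Z \<noteq> {}" "\<forall>a\<in>Z. \<forall>b\<in>Z. {a,b} \<notin> ?E" for Z
  proof -
    have ind: "indep G Z" unfolding indep_def
    proof (intro conjI ballI)
      show "Z \<subseteq> verts G" using Z(1) by blast
      fix a b assume ab: "a \<in> Z" "b \<in> Z"
      hence abX: "a \<notin> X" "b \<notin> X" using Z(1) by blast+
      have "{a,b} \<notin> ?E" using Z(3) ab by blast
      thus "{a,b} \<notin> edges G" using abX by simp
    qed
    have s: "2 \<le> int (card (nbhd G Z)) - int (card Z)" using surplus_le[OF sg Z(2) ind] sp by linarith
    hence s': "card Z + 2 \<le> card (nbhd G Z)" by linarith
    have sub: "nbhd G Z - X \<subseteq> {y \<in> ?W - Z. \<exists>z\<in>Z. {z,y} \<in> ?E}"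
    proof
      fix y assume y: "y \<in> nbhd G Z - X"
      then obtain z where z: "z \<in> Z" "{z,y} \<in> edges G" "y \<in> verts G" "y \<notin> Z" unfolding nbhd_def by blast
      have "z \<notin> X" using z(1) Z(1) by blast
      hence "{z,y} \<inter> X = {}" using y by blast
      thus "y \<in> {y \<in> ?W - Z. \<exists>z\<in>Z. {z,y} \<in> ?E}" using z y by auto
    qed
    have c1: "card (nbhd G Z) - card X \<le> card (nbhd G Z - X)" using diff_card_le_card_Diff[OF fX] .
    have c2: "card (nbhd G Z - X) \<le> card {y \<in> ?W - Z. \<exists>z\<in>Z. {z,y} \<in> ?E}"
      by (rule card_mono[OF _ sub]) (rule finite_subset[OF _ finW], blast)
    show ?thesis using s' c1 c2 cX by linarith
  qed
  have feasd: "\<forall>a\<in>?W. \<forall>b\<in>?W. {a,b} \<in> ?E \<longrightarrow> (\<lambda>v. x v - 1/2) a + (\<lambda>v. x v - 1/2) b \<ge> 0"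
    using feas by force
  have "sum (\<lambda>v. x v - 1/2) ?W \<ge> 0" using half_lemma[OF finW hall feasd] by blast
  hence "sum x ?W - real (card ?W) / 2 \<ge> 0" by (simp add: sum_subtractf)
  thus "real (card (verts G - X)) / 2 \<le> sum x (verts (del G X))" by simp
qed

lemma khat_gen:
  assumes "2 * LP G \<le> real n" "real n - real r \<le> 2 * LP Gi" "MM Gi + 1 \<le> MM G" "ki = k - int r"
  shows "khat Gi ki \<le> khat G k - 1"
proof -
  have "real (MM Gi) + 1 \<le> real (MM G)" using assms(3) by (metis of_nat_1 of_nat_add of_nat_le_iff)
  thus ?thesis unfolding khat_def using assms(1,2,4) by simp
qed



theorem lemma13:
  fixes G Gi :: "'a graph" and k ki :: int
  assumes "simple_graph G"
    and "surplus G \<ge> 2"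
    and "branch_output G k Gi ki"
  shows "khat Gi ki \<le> khat G k - 1"
proof -
  note sg = assms(1) and sp = assms(2)
  let ?n = "card (verts G)"
  have LG: "2 * LP G \<le> real ?n" using LP_upper[OF sg] by linarith
  have OV: "GE_O G \<subseteq> verts G" unfolding GE_O_def by blast
  have one: "khat (del G {t}) (k - 1) \<le> khat G k - 1" if t: "t \<in> GE_I G \<union> GE_P G" for t
  proof -
    have tV: "t \<in> verts G" and tO: "t \<notin> GE_O G"
      using t unfolding GE_I_def GE_P_def nbhd_def by blast+
    have mm: "MM (del G {t}) + 1 \<le> MM G" using MM_del_notO[OF sg tO tV] .
    have c: "card (verts G - {t}) = ?n - 1" using tV by simp
    have n1: "?n \<ge> 1" using tV sg unfolding simple_graph_def by (metis card_0_eq empty_iff less_one not_le)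
    have "real (card (verts G - {t})) / 2 \<le> LP (del G {t})"
      using LP_del_lower[OF sg sp] by simp
    hence lp: "real ?n - real (1::nat) \<le> 2 * LP (del G {t})" using c n1 by (simp add: of_nat_diff)
    show ?thesis using khat_gen[OF LG lp mm] by simp
  qed
  from assms(3) show ?thesis
  proof (cases rule: branch_output.cases)
    case (rule1 u v)
    thus ?thesis using one by auto
  next
    case (rule2 u v w G' x y)
    have uV: "u \<in> verts G" "v \<in> verts G" "w \<in> verts G" using rule2 OV by blast+
    have two: "2 * LP G \<le> real ?n" "real ?n - real (2::nat) \<le> 2 * LP (del G {a,b})"
      if ab: "a \<in> verts G" "b \<in> verts G" "a \<noteq> b" for a b
    proof -
      show "2 * LP G \<le> real ?n" by (rule LG)
      have c: "card (verts G - {a,b}) = ?n - 2" using ab by (simp add: card_Diff_subset)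
      have n2: "?n \<ge> 2"
      proof -
        have "{a,b} \<subseteq> verts G" using ab by blast
        hence "card {a,b} \<le> ?n" using card_mono sg unfolding simple_graph_def by blast
        thus ?thesis using ab(3) by simp
      qed
      have "real (card (verts G - {a,b})) / 2 \<le> LP (del G {a,b})"
        using LP_del_lower[OF sg sp] by (simp add: card_insert_if)
      thus "real ?n - real (2::nat) \<le> 2 * LP (del G {a,b})" using c n2 by (simp add: of_nat_diff)
    qed
    have k2: "ki = k - int 2" using rule2 by simp
    have G1: "khat (del G {v,w}) ki \<le> khat G k - 1"
      using khat_gen[OF LG two(2)[OF uV(2,3) rule2(6)] MM_del_two[OF sg rule2(3) rule2(7,8) rule2(6)] k2] .
    have G2: "khat (del G' {z}) ki \<le> khat G k - 1" if z: "z \<in> GE_P G'" for z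
    proof -
      have sg': "simple_graph G'" using del_simple[OF sg] rule2 by simp
      have zV: "z \<in> verts G'" and zO: "z \<notin> GE_O G'" using z unfolding GE_P_def by blast+
      have zV2: "z \<in> verts G" "z \<noteq> u" using zV rule2 by auto
      have mm: "MM (del G' {z}) + 1 \<le> MM G" using MM_del_notO[OF sg' zO zV] MM_del_le[OF sg, of "{u}"] rule2 by simp
      have eq: "del G' {z} = del G {u,z}" using rule2 del_del by (metis insert_is_Un)
      show ?thesis using khat_gen[OF LG two(2)[OF uV(1) zV2(1) zV2(2)[symmetric]] _ k2] mm eq by simp
    qed
    show ?thesis using rule2 G1 G2 by auto
  qed
qed


end
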